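(* Let $R>0$ and $p>0$. Let $\mathcal G$ be a hypergraph, $U$ a set, and $\pi:V(\mathcal G)\to U$ a function with $|\pi(E)|=|E|$ for every $E\in\mathcal G$. Then for every $\vartheta:\pi(\mathcal G)\to\mathbb R_{\ge0}$, $$\Lambda_p(\vartheta\mathbin{\hat\circ}\pi)\le\Lambda_p(\vartheta).$$
   Context: A hypergraph is identified with its edge set; $\pi(\mathcal G)=\{\pi(E):E\in\mathcal G\}$ with vertex set $\pi(V(\mathcal G))$. For a measure $\nu$ on a hypergraph $\mathcal K$: $d_\nu(L)=\sum_{E\in\mathcal K,L\subset E}\nu(E)$ and $\Lambda_p(\nu)=\sum_{L\subset V(\mathcal K),|L|\ge2}d_\nu(L)^2p^{-|L|}$. The pullback $\vartheta\mathbin{\hat\circ}\pi:\mathcal G\to\mathbb R_{\ge0}$ is $\vartheta\mathbin{\hat\circ}\pi(E)=\vartheta(\pi(E))/|\{E_0\in\mathcal G:\pi(E_0)=\pi(E)\}|$. *)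

theory Defs
  imports Complex_Main
begin

text \<open>A hypergraph is given by its (finite) edge set K together with a finite vertex set V
  containing all edges. Measures are real functions on edges.\<close>

definition hdeg :: "'a set set \<Rightarrow> ('a set \<Rightarrow> real) \<Rightarrow> 'a set \<Rightarrow> real" where
  "hdeg K \<nu> L = (\<Sum>E\<in>{E\<in>K. L \<subseteq> E}. \<nu> E)"

definition Lambda :: "real \<Rightarrow> 'a set \<Rightarrow> 'a set set \<Rightarrow> ('a set \<Rightarrow> real) \<Rightarrow> real" where
  "Lambda p V K \<nu> = (\<Sum>L\<in>{L. L \<subseteq> V \<and> card L \<ge> 2}. (hdeg K \<nu> L)^2 * p powr (- real (card L)))"

definition pullback :: "('b set \<Rightarrow> real) \<Rightarrow> ('a \<Rightarrow> 'b) \<Rightarrow> 'a set set \<Rightarrow> 'a set \<Rightarrow> real" where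
  "pullback \<theta> \<pi> G E = \<theta> (\<pi> ` E) / real (card {E0\<in>G. \<pi> ` E0 = \<pi> ` E})"

end

theory Submission
  imports Defs
begin

lemma sq_le_sum:
  fixes f :: "'c \<Rightarrow> real"
  assumes "finite A" "\<forall>x\<in>A. f x \<ge> 0"
  shows "(\<Sum>x\<in>A. (f x)^2) \<le> (\<Sum>x\<in>A. f x)^2"
proof -
  have "(\<Sum>x\<in>A. (f x)^2) \<le> (\<Sum>x\<in>A. f x * sum f A)"
    using assms by (intro sum_mono) (auto simp: power2_eq_square intro!: mult_left_mono member_le_sum)
  also have "\<dots> = (sum f A)^2" by (simp add: sum_distrib_right power2_eq_square)
  finally show ?thesis .
qed

theorem lemmaC2:
  fixes R p :: real and V :: "'a set" and G :: "'a set set" and U :: "'b set"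
    and \<pi> :: "'a \<Rightarrow> 'b" and \<theta> :: "'b set \<Rightarrow> real"
  assumes "R > 0" and "p > 0"
    and "finite V" and "\<forall>E\<in>G. E \<subseteq> V"
    and "\<pi> ` V \<subseteq> U"
    and "\<forall>E\<in>G. card (\<pi> ` E) = card E"
    and "\<forall>F\<in>(\<lambda>E. \<pi> ` E) ` G. \<theta> F \<ge> 0"
  shows "Lambda p V G (pullback \<theta> \<pi> G) \<le> Lambda p (\<pi> ` V) ((\<lambda>E. \<pi> ` E) ` G) \<theta>"
proof -
  define w where "w = pullback \<theta> \<pi> G"
  define S where "S = {L. L \<subseteq> V \<and> card L \<ge> 2}"
  define T where "T = {M. M \<subseteq> \<pi> ` V \<and> card M \<ge> 2}"
  define h where "h L = (hdeg G w L)^2 * p powr (- real (card L))" for L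
  define D where "D M = hdeg ((\<lambda>E. \<pi> ` E) ` G) \<theta> M" for M
  have finG: "finite G" by (rule finite_subset[of _ "Pow V"]) (use assms(3,4) in auto)
  have finS: "finite S" unfolding S_def by (rule finite_subset[of _ "Pow V"]) (use assms(3) in auto)
  have finT: "finite T" unfolding T_def by (rule finite_subset[of _ "Pow (\<pi> ` V)"]) (use assms(3) in auto)
  have finE: "finite E" if "E \<in> G" for E using assms(3,4) that by (meson finite_subset)
  have injE: "inj_on \<pi> E" if "E \<in> G" for E
    using assms(6) that finE[OF that] by (intro eq_card_imp_inj_on) auto
  have cardpos: "card {E0\<in>G. \<pi> ` E0 = \<pi> ` E} > 0" if "E \<in> G" for E
    using that finG by (subst card_gt_0_iff) auto
  have w_nn: "w E \<ge> 0" if "E \<in> G" for E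
    using that assms(7) unfolding w_def pullback_def by auto
  have d_nn: "hdeg G w L \<ge> 0" for L
    unfolding hdeg_def using w_nn by (intro sum_nonneg) auto
  define S' where "S' = {L\<in>S. inj_on \<pi> L}"
  have d0: "hdeg G w L = 0" if "\<not> inj_on \<pi> L" for L
  proof -
    have "{E\<in>G. L \<subseteq> E} = {}" using that injE by (auto dest: inj_on_subset)
    then show ?thesis unfolding hdeg_def by (simp only: sum.empty)
  qed
  have "Lambda p V G w = sum h S" by (simp add: Lambda_def S_def h_def)
  also have "sum h S = sum h S'"
    using finS d0 by (intro sum.mono_neutral_right) (auto simp: S'_def h_def)
  also have "\<dots> = (\<Sum>M\<in>T. sum h {L. L \<in> S' \<and> \<pi> ` L = M})"
  proof (rule sum.group[symmetric])
    show "finite S'" using finS by (simp add: S'_def)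
    show "finite T" by (rule finT)
    show "(\<lambda>L. \<pi> ` L) ` S' \<subseteq> T"
      unfolding S'_def S_def T_def by (auto simp: card_image)
  qed
  also have "\<dots> \<le> (\<Sum>M\<in>T. (D M)^2 * p powr (- real (card M)))"
  proof (rule sum_mono)
    fix M assume MT: "M \<in> T"
    define A where "A = {L. L \<in> S' \<and> \<pi> ` L = M}"
    have finA: "finite A" using finS by (simp add: A_def S'_def)
    have cardA: "card L = card M" if "L \<in> A" for L
      using that by (auto simp: A_def S'_def card_image)
    have "sum h A = (\<Sum>L\<in>A. (hdeg G w L)^2) * p powr (- real (card M))"
      unfolding sum_distrib_right h_def using cardA by (intro sum.cong) auto
    also have "\<dots> \<le> (\<Sum>L\<in>A. hdeg G w L)^2 * p powr (- real (card M))"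
      using sq_le_sum[OF finA] d_nn by (intro mult_right_mono) auto
    also have "\<dots> \<le> (D M)^2 * p powr (- real (card M))"
    proof (intro mult_right_mono power_mono)
      show "0 \<le> (\<Sum>L\<in>A. hdeg G w L)" using d_nn by (intro sum_nonneg) auto
      show "0 \<le> p powr (- real (card M))" by simp
      have "(\<Sum>L\<in>A. hdeg G w L) = (\<Sum>L\<in>A. \<Sum>E\<in>{E. E \<in> G \<and> L \<subseteq> E}. w E)"
        unfolding hdeg_def by simp
      also have "\<dots> = (\<Sum>E\<in>G. \<Sum>L\<in>{L. L \<in> A \<and> L \<subseteq> E}. w E)"
        by (rule sum.swap_restrict[OF finA finG])
      also have "\<dots> = (\<Sum>E\<in>G. real (card {L. L \<in> A \<and> L \<subseteq> E}) * w E)"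
        by simp
      also have "\<dots> \<le> (\<Sum>E\<in>G. if M \<subseteq> \<pi> ` E then w E else 0)"
      proof (rule sum_mono)
        fix E assume EG: "E \<in> G"
        show "real (card {L. L \<in> A \<and> L \<subseteq> E}) * w E \<le> (if M \<subseteq> \<pi> ` E then w E else 0)"
        proof (cases "M \<subseteq> \<pi> ` E")
          case True
          have sub: "{L. L \<in> A \<and> L \<subseteq> E} \<subseteq> {E \<inter> \<pi> -` M}"
          proof
            fix L assume "L \<in> {L. L \<in> A \<and> L \<subseteq> E}"
            then have LE: "L \<subseteq> E" and LM: "\<pi> ` L = M" by (auto simp: A_def)
            have "L = E \<inter> \<pi> -` M"
            proof
              show "L \<subseteq> E \<inter> \<pi> -` M" using LE LM by auto
              show "E \<inter> \<pi> -` M \<subseteq> L"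
              proof
                fix x assume "x \<in> E \<inter> \<pi> -` M"
                then obtain y where "y \<in> L" "\<pi> y = \<pi> x" "x \<in> E" using LM by force
                then show "x \<in> L" using inj_onD[OF injE[OF EG]] LE by blast
              qed
            qed
            then show "L \<in> {E \<inter> \<pi> -` M}" by simp
          qed
          have "card {L. L \<in> A \<and> L \<subseteq> E} \<le> 1"
            using card_mono[OF _ sub] by simp
          then have "real (card {L. L \<in> A \<and> L \<subseteq> E}) * w E \<le> 1 * w E"
            using w_nn[OF EG] by (intro mult_right_mono) auto
          then show ?thesis using True by simp
        next
          case False
          have "{L. L \<in> A \<and> L \<subseteq> E} = {}" using False by (auto simp: A_def)
          then have "card {L. L \<in> A \<and> L \<subseteq> E} = 0" by (metis card.empty)
          then show ?thesis using False by simp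
        qed
      qed
      also have "\<dots> = (\<Sum>E\<in>{E\<in>G. M \<subseteq> \<pi> ` E}. w E)"
        by (rule sum.inter_filter[OF finG, symmetric])
      also have "\<dots> = (\<Sum>F\<in>{F\<in>(\<lambda>E. \<pi> ` E) ` G. M \<subseteq> F}.
                        sum w {E. E \<in> {E\<in>G. M \<subseteq> \<pi> ` E} \<and> \<pi> ` E = F})"
        by (rule sum.group[symmetric]) (use finG in auto)
      also have "\<dots> = (\<Sum>F\<in>{F\<in>(\<lambda>E. \<pi> ` E) ` G. M \<subseteq> F}. \<theta> F)"
      proof (rule sum.cong[OF refl])
        fix F assume "F \<in> {F\<in>(\<lambda>E. \<pi> ` E) ` G. M \<subseteq> F}"
        then obtain E1 where E1: "E1 \<in> G" "F = \<pi> ` E1" "M \<subseteq> F" by auto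
        define X where "X = {E0\<in>G. \<pi> ` E0 = F}"
        have setX: "{E. E \<in> {E\<in>G. M \<subseteq> \<pi> ` E} \<and> \<pi> ` E = F} = X"
          using E1 by (auto simp: X_def)
        have cX: "card X > 0" using cardpos[OF E1(1)] E1(2) by (simp add: X_def)
        have "sum w X = (\<Sum>E\<in>X. \<theta> F / real (card X))"
          by (intro sum.cong) (auto simp: w_def pullback_def X_def)
        also have "\<dots> = \<theta> F" using cX by simp
        finally show "sum w {E. E \<in> {E\<in>G. M \<subseteq> \<pi> ` E} \<and> \<pi> ` E = F} = \<theta> F"
          using setX by simp
      qed
      also have "\<dots> = D M" unfolding D_def hdeg_def by simp
      finally show "(\<Sum>L\<in>A. hdeg G w L) \<le> D M" .
    qed
    finally show "sum h {L. L \<in> S' \<and> \<pi> ` L = M} \<le> (D M)^2 * p powr (- real (card M))"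
      by (simp add: A_def)
  qed
  also have "\<dots> = Lambda p (\<pi> ` V) ((\<lambda>E. \<pi> ` E) ` G) \<theta>"
    by (simp add: Lambda_def T_def D_def)
  finally show ?thesis by (simp add: w_def)
qed

end
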